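(* Let $\mathcal{L}\subseteq\{0,1\}^n$ be a nonempty lattice (closed under coordinatewise minimum and maximum) and let $d_{\mathcal{L}}(x)=\min_{y\in\mathcal{L}}\|x-y\|_1$. Define $f:\{0,1\}^{n+2}\to\mathbb{R}$, writing arguments as $(a,b,x)$ with $a,b\in\{0,1\}$, $x\in\{0,1\}^n$, by $f(0,0,x)=\|x\|_1$, $f(1,1,x)=1-\|x\|_1$, and $f(0,1,x)=f(1,0,x)=d_{\mathcal{L}}(x)$. Then $f$ has exactly $|\mathcal{L}|$ violated squares, namely the squares $\{(0,0,x),(0,1,x),(1,0,x),(1,1,x)\}$ for $x\in\mathcal{L}$.
   Context: A square in $\{0,1\}^m$ is a set $\{z, z+\mathbf{e}_i, z+\mathbf{e}_j, z+\mathbf{e}_i+\mathbf{e}_j\}$ with $i\neq j$, $z_i=z_j=0$, where $\mathbf{e}_i$ is the $i$-th standard basis vector; it is violated (for $f$) if $f(z)+f(z+\mathbf{e}_i+\mathbf{e}_j) > f(z+\mathbf{e}_i)+f(z+\mathbf{e}_j)$. *)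

theory Defs
  imports Complex_Main
begin

text \<open>Points of the cube {0,1}^m are boolean lists of length m (True = 1).\<close>

definition cube :: "nat \<Rightarrow> bool list set" where
  "cube m = {xs. length xs = m}"

definition norm1 :: "bool list \<Rightarrow> nat" where
  "norm1 x = length (filter id x)"

definition dist1 :: "bool list \<Rightarrow> bool list \<Rightarrow> nat" where
  "dist1 x y = length (filter id (map2 (\<noteq>) x y))"

definition is_lattice :: "nat \<Rightarrow> bool list set \<Rightarrow> bool" where
  "is_lattice n L \<longleftrightarrow> L \<subseteq> cube n \<and> L \<noteq> {} \<and>
     (\<forall>x\<in>L. \<forall>y\<in>L. map2 (\<and>) x y \<in> L \<and> map2 (\<or>) x y \<in> L)"

definition distL :: "bool list set \<Rightarrow> bool list \<Rightarrow> nat" where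
  "distL L x = Min ((\<lambda>y. dist1 x y) ` L)"

definition square :: "bool list \<Rightarrow> nat \<Rightarrow> nat \<Rightarrow> bool list set" where
  "square z i j = {z, z[i := True], z[j := True], z[i := True, j := True]}"

definition is_square_data :: "nat \<Rightarrow> bool list \<Rightarrow> nat \<Rightarrow> nat \<Rightarrow> bool" where
  "is_square_data m z i j \<longleftrightarrow> z \<in> cube m \<and> i < m \<and> j < m \<and> i \<noteq> j \<and> \<not> z ! i \<and> \<not> z ! j"

definition violated :: "(bool list \<Rightarrow> real) \<Rightarrow> bool list \<Rightarrow> nat \<Rightarrow> nat \<Rightarrow> bool" where
  "violated f z i j \<longleftrightarrow> f z + f (z[i := True, j := True]) > f (z[i := True]) + f (z[j := True])"

definition violated_squares :: "nat \<Rightarrow> (bool list \<Rightarrow> real) \<Rightarrow> bool list set set" where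
  "violated_squares m f = {square z i j | z i j. is_square_data m z i j \<and> violated f z i j}"

end

theory Submission
  imports Defs
begin


lemma dist1_sum: "length x = length y \<Longrightarrow> dist1 x y = (\<Sum>k<length x. if x!k \<noteq> y!k then 1 else 0)"
proof -
  assume l: "length x = length y"
  have "dist1 x y = card {i. i < length x \<and> x!i \<noteq> y!i}"
    unfolding dist1_def length_filter_conv_card using l by (intro arg_cong[where f=card]) auto
  also have "{i. i < length x \<and> x!i \<noteq> y!i} = {k\<in>{..<length x}. x!k \<noteq> y!k}" by auto
  also have "card \<dots> = (\<Sum>k<length x. if x!k \<noteq> y!k then 1 else 0)"
    by (simp add: sum.inter_filter[symmetric])
  finally show ?thesis .
qed

lemma norm1_sum: "norm1 x = (\<Sum>k<length x. if x!k then 1 else 0)"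
proof -
  have "norm1 x = card {i. i < length x \<and> x!i}"
    unfolding norm1_def length_filter_conv_card by simp
  also have "{i. i < length x \<and> x!i} = {k\<in>{..<length x}. x!k}" by auto
  also have "card \<dots> = (\<Sum>k<length x. if x!k then 1 else 0)"
    by (simp add: sum.inter_filter[symmetric])
  finally show ?thesis .
qed

lemma norm1_upd: "k < length x \<Longrightarrow> \<not> x!k \<Longrightarrow> norm1 (x[k:=True]) = norm1 x + 1"
proof -
  assume k: "k < length x" "\<not> x!k"
  have "norm1 (x[k:=True]) = (\<Sum>i<length x. (if x!i then 1 else 0) + (if i = k then 1 else 0))"
    unfolding norm1_sum using k by (intro sum.cong) (auto simp: nth_list_update)
  also have "\<dots> = norm1 x + 1" using k by (simp add: sum.distrib norm1_sum)
  finally show ?thesis .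
qed

lemma dist1_lip1: "length x = length y \<Longrightarrow> k < length x \<Longrightarrow> dist1 (x[k:=True]) y \<le> dist1 x y + 1"
proof -
  assume l: "length x = length y" and k: "k < length x"
  have "dist1 (x[k:=True]) y \<le> (\<Sum>i<length x. (if x!i \<noteq> y!i then 1 else 0) + (if i = k then 1 else 0))"
    using l k by (simp add: dist1_sum) (intro sum_mono, auto simp: nth_list_update)
  also have "\<dots> = dist1 x y + 1" using k l by (simp add: sum.distrib dist1_sum)
  finally show ?thesis .
qed

lemma dist1_lip2: "length x = length y \<Longrightarrow> k < length x \<Longrightarrow> dist1 x y \<le> dist1 (x[k:=True]) y + 1"
proof -
  assume l: "length x = length y" and k: "k < length x"
  have "dist1 x y \<le> (\<Sum>i<length x. (if x[k:=True]!i \<noteq> y!i then 1 else 0) + (if i = k then 1 else 0))"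
    using l k by (simp add: dist1_sum) (intro sum_mono, auto simp: nth_list_update)
  also have "\<dots> = dist1 (x[k:=True]) y + 1" using k l by (simp add: sum.distrib dist1_sum)
  finally show ?thesis .
qed

lemma dist1_zero: "length x = length y \<Longrightarrow> dist1 x y = 0 \<Longrightarrow> x = y"
  by (auto simp: dist1_sum intro: nth_equalityI split: if_splits)

lemma dist1_self: "dist1 x x = 0"
  by (simp add: dist1_sum)

lemma dist1_submod:
  assumes l: "length x = n" "length y1 = n" "length y2 = n" and ij: "i < n" "j < n" "i \<noteq> j"
    and xi: "\<not> x!i" "\<not> x!j"
  shows "dist1 x (map2 (\<and>) y1 y2) + dist1 (x[i:=True,j:=True]) (map2 (\<or>) y1 y2)
         \<le> dist1 (x[i:=True]) y1 + dist1 (x[j:=True]) y2"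
  using l ij xi
  apply (simp add: dist1_sum sum.distrib[symmetric])
  apply (intro sum_mono)
  apply (auto simp: nth_list_update)
  done

lemma lat_fin: "is_lattice n L \<Longrightarrow> finite L"
  unfolding is_lattice_def cube_def
  by (auto intro: finite_subset[OF _ finite_lists_length_eq[of UNIV n]])

lemma distL_le: "is_lattice n L \<Longrightarrow> y \<in> L \<Longrightarrow> distL L x \<le> dist1 x y"
  unfolding distL_def using lat_fin by (intro Min_le) auto

lemma distL_ex: "is_lattice n L \<Longrightarrow> \<exists>y\<in>L. distL L x = dist1 x y"
proof -
  assume l: "is_lattice n L"
  have "distL L x \<in> (\<lambda>y. dist1 x y) ` L" unfolding distL_def
    using lat_fin[OF l] l by (intro Min_in) (auto simp: is_lattice_def)
  thus ?thesis by auto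
qed

lemma lat_len: "is_lattice n L \<Longrightarrow> y \<in> L \<Longrightarrow> length y = n"
  by (auto simp: is_lattice_def cube_def)

lemma distL_zero: "is_lattice n L \<Longrightarrow> length x = n \<Longrightarrow> distL L x = 0 \<longleftrightarrow> x \<in> L"
proof
  assume l: "is_lattice n L" "length x = n" "distL L x = 0"
  then obtain y where "y \<in> L" "dist1 x y = 0" using distL_ex by metis
  thus "x \<in> L" using dist1_zero lat_len l by metis
next
  assume l: "is_lattice n L" "length x = n" "x \<in> L"
  thus "distL L x = 0" using distL_le[OF l(1) l(3), of x] dist1_self by simp
qed

lemma distL_lip:
  assumes l: "is_lattice n L" "length x = n" "k < n"
  shows "distL L (x[k:=True]) \<le> distL L x + 1" "distL L x \<le> distL L (x[k:=True]) + 1"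
proof -
  obtain y where y: "y \<in> L" "distL L x = dist1 x y" using distL_ex[OF l(1)] by blast
  show "distL L (x[k:=True]) \<le> distL L x + 1"
    using distL_le[OF l(1) y(1), of "x[k:=True]"] dist1_lip1[of x y k] y lat_len[OF l(1) y(1)] l by simp
  obtain y where y: "y \<in> L" "distL L (x[k:=True]) = dist1 (x[k:=True]) y" using distL_ex[OF l(1)] by blast
  show "distL L x \<le> distL L (x[k:=True]) + 1"
    using distL_le[OF l(1) y(1), of "x"] dist1_lip2[of x y k] y lat_len[OF l(1) y(1)] l by simp
qed

lemma distL_submod:
  assumes l: "is_lattice n L" "length x = n" and ij: "i < n" "j < n" "i \<noteq> j"
    and xi: "\<not> x!i" "\<not> x!j"
  shows "distL L x + distL L (x[i:=True,j:=True]) \<le> distL L (x[i:=True]) + distL L (x[j:=True])"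
proof -
  obtain y1 where y1: "y1 \<in> L" "distL L (x[i:=True]) = dist1 (x[i:=True]) y1" using distL_ex[OF l(1)] by blast
  obtain y2 where y2: "y2 \<in> L" "distL L (x[j:=True]) = dist1 (x[j:=True]) y2" using distL_ex[OF l(1)] by blast
  have c: "map2 (\<and>) y1 y2 \<in> L" "map2 (\<or>) y1 y2 \<in> L" using l(1) y1 y2 by (auto simp: is_lattice_def)
  show ?thesis
    using distL_le[OF l(1) c(1), of x] distL_le[OF l(1) c(2), of "x[i:=True,j:=True]"]
      dist1_submod[OF l(2) lat_len[OF l(1) y1(1)] lat_len[OF l(1) y2(1)] ij xi] y1 y2 by linarith
qed

lemma main_ij:
  fixes n :: nat and L :: "bool list set" and f :: "bool list \<Rightarrow> real"
  assumes lat: "is_lattice n L"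
    and f00: "\<forall>x\<in>cube n. f (False # False # x) = real (norm1 x)"
    and f11: "\<forall>x\<in>cube n. f (True # True # x) = 1 - real (norm1 x)"
    and f01: "\<forall>x\<in>cube n. f (False # True # x) = real (distL L x)"
    and f10: "\<forall>x\<in>cube n. f (True # False # x) = real (distL L x)"
    and sq: "is_square_data (n+2) z i j" and ij: "i < j" and viol: "violated f z i j"
  shows "i = 0 \<and> j = 1 \<and> (\<exists>x\<in>L. z = False#False#x)"
proof -
  obtain a b x where z: "z = a#b#x" and lx: "length x = n"
    using sq unfolding is_square_data_def cube_def
    by (cases z; cases "tl z") auto
  have cx: "x \<in> cube n" using lx by (simp add: cube_def)
  have cu: "\<And>k. x[k:=True] \<in> cube n" "\<And>k l. x[k:=True,l:=True] \<in> cube n" using lx by (auto simp: cube_def)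
  note fs = f00[rule_format] f11[rule_format] f01[rule_format] f10[rule_format]
  show ?thesis
  proof (cases j)
    case 0 thus ?thesis using ij by simp
  next
    case (Suc j')
    show ?thesis
    proof (cases j')
      case 0
      hence i0: "i = 0" "j = 1" using ij Suc by auto
      have ab: "\<not> a" "\<not> b" using sq z i0 by (auto simp: is_square_data_def)
      have "f (False#False#x) + f (True#True#x) > f (True#False#x) + f (False#True#x)"
        using viol z i0 ab by (simp add: violated_def)
      hence "distL L x = 0" using fs[OF cx] by simp
      thus ?thesis using i0 z ab distL_zero[OF lat lx] by blast
    next
      case (Suc k)
      have jk: "j = Suc (Suc k)" using Suc \<open>j = Suc j'\<close> by simp
      have k: "k < n" "\<not> x!k" using sq z jk by (auto simp: is_square_data_def)
      have nu: "real (norm1 (x[k:=True])) = real (norm1 x) + 1" using norm1_upd[of k x] k lx by simp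
      have dl: "real (distL L (x[k:=True])) \<le> real (distL L x) + 1" "real (distL L x) \<le> real (distL L (x[k:=True])) + 1"
        using distL_lip[OF lat lx k(1)] by linarith+
      have False
      proof (cases i)
        case 0
        have "\<not> a" using sq z 0 by (auto simp: is_square_data_def)
        then show False using viol z 0 jk fs[OF cx] fs[OF cu(1)] nu dl
          by (cases b) (simp_all add: violated_def)
      next
        case (Suc i')
        show False
        proof (cases i')
          case 0
          have "\<not> b" using sq z 0 Suc by (auto simp: is_square_data_def)
          then show False using viol z 0 Suc jk fs[OF cx] fs[OF cu(1)] nu dl
            by (cases a) (simp_all add: violated_def)
        next
          case (Suc l)
          have il: "i = Suc (Suc l)" using Suc \<open>i = Suc i'\<close> by simp
          have l: "l < n" "\<not> x!l" "l \<noteq> k" using sq z il jk by (auto simp: is_square_data_def)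
          have nu2: "real (norm1 (x[l:=True])) = real (norm1 x) + 1" using norm1_upd[of l x] l lx by simp
          have nu3: "real (norm1 (x[l:=True,k:=True])) = real (norm1 x) + 2"
            using norm1_upd[of k "x[l:=True]"] norm1_upd[of l x] l k lx by (simp add: nth_list_update)
          have sm: "real (distL L x) + real (distL L (x[l:=True,k:=True])) \<le> real (distL L (x[l:=True])) + real (distL L (x[k:=True]))"
            using distL_submod[OF lat lx l(1) k(1) l(3) l(2) k(2)] by linarith
          show False using viol z il jk fs[OF cx] fs[OF cu(1)] fs[OF cu(2)] nu nu2 nu3 sm
            by (cases a; cases b) (simp_all add: violated_def)
        qed
      qed
      thus ?thesis ..
    qed
  qed
qed


theorem lemma5:
  fixes n :: nat and L :: "bool list set" and f :: "bool list \<Rightarrow> real"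
  assumes lat: "is_lattice n L"
    and f00: "\<forall>x\<in>cube n. f (False # False # x) = real (norm1 x)"
    and f11: "\<forall>x\<in>cube n. f (True # True # x) = 1 - real (norm1 x)"
    and f01: "\<forall>x\<in>cube n. f (False # True # x) = real (distL L x)"
    and f10: "\<forall>x\<in>cube n. f (True # False # x) = real (distL L x)"
  shows "violated_squares (n + 2) f =
           (\<lambda>x. {False # False # x, False # True # x, True # False # x, True # True # x}) ` L
         \<and> card (violated_squares (n + 2) f) = card L"
proof -
  let ?Q = "(\<lambda>x. {False # False # x, False # True # x, True # False # x, True # True # x})"
  have sqQ: "square (False#False#x) 0 1 = ?Q x" "square (False#False#x) 1 0 = ?Q x" for x
    by (auto simp: square_def)
  have A: "violated_squares (n + 2) f = ?Q ` L"
  proof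
    show "violated_squares (n + 2) f \<subseteq> ?Q ` L"
    proof
      fix S assume "S \<in> violated_squares (n + 2) f"
      then obtain z i j where S: "S = square z i j" and sq: "is_square_data (n+2) z i j"
        and v: "violated f z i j" unfolding violated_squares_def by blast
      have "i < j \<or> j < i" using sq by (auto simp: is_square_data_def)
      thus "S \<in> ?Q ` L"
      proof
        assume "i < j"
        then obtain x where "i = 0" "j = 1" "x \<in> L" "z = False#False#x"
          using main_ij[OF lat f00 f11 f01 f10 sq _ v] by blast
        thus ?thesis using S sqQ by auto
      next
        assume ji: "j < i"
        have sq': "is_square_data (n+2) z j i" using sq by (auto simp: is_square_data_def)
        have v': "violated f z j i" using v sq
          by (auto simp: violated_def is_square_data_def list_update_swap)
        obtain x where "j = 0" "i = 1" "x \<in> L" "z = False#False#x"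
          using main_ij[OF lat f00 f11 f01 f10 sq' ji v'] by blast
        thus ?thesis using S sqQ by auto
      qed
    qed
  next
    show "?Q ` L \<subseteq> violated_squares (n + 2) f"
    proof
      fix S assume "S \<in> ?Q ` L"
      then obtain x where x: "x \<in> L" "S = ?Q x" by blast
      have lx: "length x = n" using lat_len[OF lat x(1)] .
      have cx: "x \<in> cube n" using lx by (simp add: cube_def)
      have d: "distL L x = 0" using distL_zero[OF lat lx] x by simp
      have "is_square_data (n+2) (False#False#x) 0 1" using lx by (simp add: is_square_data_def cube_def)
      moreover have "violated f (False#False#x) 0 1"
        using f00 f11 f01 f10 cx d by (simp add: violated_def)
      ultimately show "S \<in> violated_squares (n + 2) f"
        unfolding violated_squares_def using x sqQ by blast
    qed
  qed
  have "inj_on ?Q L"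
  proof (rule inj_onI)
    fix x y assume "?Q x = ?Q y"
    hence "False#False#x \<in> ?Q y" by (metis insertI1)
    thus "x = y" by simp
  qed
  thus ?thesis using A card_image by auto
qed

end
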